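(* Let $d,m\in\mathbb{Z}^+$, $n\in\mathbb{N}$, $r\in\mathbb{Z}$, and let $f$ be any function from $\mathbb{Z}$ to $\mathbb{C}$. Then $$\sum_{k\equiv r\ (\mathrm{mod}\ d)}\binom nk(-1)^kf\Big(\Big\lfloor\frac{k-r}m\Big\rfloor\Big)=\sum_{j=0}^{n}\binom nj\Bigg(\sum_{i\equiv r\ (\mathrm{mod}\ d)}\binom ji(-1)^i\Bigg)\sum_{i=0}^{m-1}\sigma_{ij},$$ where $$\sigma_{ij}=\sum_{k\equiv r+i-j\ (\mathrm{mod}\ m)}\binom{n-j}k(-1)^kf\Big(\frac{k-(r+i-j)}m\Big).$$
   Context: All sums over residue classes run over all integers in the class, with $\binom Nk=0$ unless $0\le k\le N$. *)

theory Defs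
  imports Complex_Main
begin

definition binomz :: "nat \<Rightarrow> int \<Rightarrow> int" where
  "binomz N k = (if 0 \<le> k \<and> k \<le> int N then int (N choose nat k) else 0)"

end

theory Submission
  imports Defs
begin

lemma alt0:
  "(\<Sum>t=0..N. of_nat (N choose t) * (-1::complex)^(N-t)) = (if N = 0 then 1 else 0)"
proof -
  have "(1 + (-1::complex))^N = (\<Sum>t\<le>N. of_nat (N choose t) * 1^t * (-1)^(N-t))"
    by (rule binomial_ring)
  then show ?thesis by (cases N) (simp_all add: atLeast0AtMost)
qed

lemma inner:
  assumes "l \<le> n"
  shows "(\<Sum>j=0..n. of_nat (l choose j) * of_nat (j choose i) * (-1::complex)^(l-j))
         = (if i = l then 1 else 0)"
proof -
  have "(\<Sum>j=0..n. of_nat (l choose j) * of_nat (j choose i) * (-1::complex)^(l-j))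
      = (\<Sum>j=0..l. of_nat (l choose j) * of_nat (j choose i) * (-1::complex)^(l-j))"
    using assms by (intro sum.mono_neutral_right) auto
  also have "\<dots> = (if i = l then 1 else 0)"
  proof (cases "i \<le> l")
    case False
    then show ?thesis by (intro trans[OF sum.neutral]) auto
  next
    case True
    have "(\<Sum>j=0..l. of_nat (l choose j) * of_nat (j choose i) * (-1::complex)^(l-j))
        = (\<Sum>j=i..l. of_nat (l choose j) * of_nat (j choose i) * (-1::complex)^(l-j))"
      by (intro sum.mono_neutral_right) auto
    also have "\<dots> = (\<Sum>j=i..l. of_nat (l choose i) * (of_nat ((l-i) choose (j-i)) * (-1::complex)^((l-i)-(j-i))))"
    proof (intro sum.cong refl)
      fix j assume j: "j \<in> {i..l}"
      have "(l choose j) * (j choose i) = (l choose i) * ((l-i) choose (j-i))"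
        using j by (intro choose_mult) auto
      then have "(of_nat (l choose j) * of_nat (j choose i) :: complex) = of_nat (l choose i) * of_nat ((l-i) choose (j-i))"
        by (metis of_nat_mult)
      moreover have "l - j = (l-i)-(j-i)" using j by auto
      ultimately show "of_nat (l choose j) * of_nat (j choose i) * (-1::complex)^(l-j) = of_nat (l choose i) * (of_nat ((l-i) choose (j-i)) * (-1::complex)^((l-i)-(j-i)))"
        by (simp add: mult.assoc)
    qed
    also have "\<dots> = of_nat (l choose i) * (\<Sum>j=i..l. of_nat ((l-i) choose (j-i)) * (-1::complex)^((l-i)-(j-i)))"
      by (simp add: sum_distrib_left)
    also have "(\<Sum>j=i..l. of_nat ((l-i) choose (j-i)) * (-1::complex)^((l-i)-(j-i)))
        = (\<Sum>t=0..l-i. of_nat ((l-i) choose t) * (-1::complex)^((l-i)-t))"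
      using sum.shift_bounds_cl_nat_ivl[of "\<lambda>j. of_nat ((l-i) choose (j-i)) * (-1::complex)^((l-i)-(j-i))" 0 i "l-i"] True
      by simp
    also have "\<dots> = (if l - i = 0 then 1 else 0)" by (rule alt0)
    finally show ?thesis using True by auto
  qed
  finally show ?thesis .
qed

lemma e2:
  fixes F :: "nat \<Rightarrow> complex"
  assumes "j \<le> n"
  shows "of_nat (n choose j) * (\<Sum>k=0..n-j. of_nat ((n-j) choose k) * (-1)^k * F (k+j))
       = (\<Sum>l=0..n. of_nat (n choose l) * of_nat (l choose j) * (-1)^(l-j) * F l)"
proof -
  have "(\<Sum>l=0..n. of_nat (n choose l) * of_nat (l choose j) * (-1)^(l-j) * F l)
      = (\<Sum>l=j..n. of_nat (n choose l) * of_nat (l choose j) * (-1)^(l-j) * F l)"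
    by (intro sum.mono_neutral_right) auto
  also have "\<dots> = (\<Sum>k=0..n-j. of_nat (n choose (k+j)) * of_nat ((k+j) choose j) * (-1)^(k+j-j) * F (k+j))"
    using sum.shift_bounds_cl_nat_ivl[of "\<lambda>l. of_nat (n choose l) * of_nat (l choose j) * (-1::complex)^(l-j) * F l" 0 j "n-j"] assms
    by simp
  also have "\<dots> = (\<Sum>k=0..n-j. of_nat (n choose j) * (of_nat ((n-j) choose k) * (-1)^k * F (k+j)))"
  proof (intro sum.cong refl)
    fix k assume k: "k \<in> {0..n-j}"
    have "(n choose (k+j)) * ((k+j) choose j) = (n choose j) * ((n-j) choose k)"
      using k assms choose_mult[of j "k+j" n] by auto
    then have "(of_nat (n choose (k+j)) * of_nat ((k+j) choose j) :: complex) = of_nat (n choose j) * of_nat ((n-j) choose k)"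
      by (metis of_nat_mult)
    then show "of_nat (n choose (k+j)) * of_nat ((k+j) choose j) * (-1::complex)^(k+j-j) * F (k+j) = of_nat (n choose j) * (of_nat ((n-j) choose k) * (-1)^k * F (k+j))"
      by (simp add: mult.assoc)
  qed
  also have "\<dots> = of_nat (n choose j) * (\<Sum>k=0..n-j. of_nat ((n-j) choose k) * (-1)^k * F (k+j))"
    by (simp add: sum_distrib_left)
  finally show ?thesis by simp
qed

lemma core:
  fixes a F :: "nat \<Rightarrow> complex"
  shows "(\<Sum>j=0..n. of_nat (n choose j) * (\<Sum>i=0..j. of_nat (j choose i) * a i) *
            (\<Sum>k=0..n-j. of_nat ((n-j) choose k) * (-1)^k * F (k+j)))
       = (\<Sum>l=0..n. of_nat (n choose l) * a l * F l)"
proof -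
  have "(\<Sum>j=0..n. of_nat (n choose j) * (\<Sum>i=0..j. of_nat (j choose i) * a i) *
            (\<Sum>k=0..n-j. of_nat ((n-j) choose k) * (-1)^k * F (k+j)))
     = (\<Sum>j=0..n. (\<Sum>i=0..n. of_nat (j choose i) * a i) *
            (\<Sum>l=0..n. of_nat (n choose l) * of_nat (l choose j) * (-1)^(l-j) * F l))"
  proof (intro sum.cong refl)
    fix j assume j: "j \<in> {0..n}"
    have "(\<Sum>i=0..j. of_nat (j choose i) * a i) = (\<Sum>i=0..n. of_nat (j choose i) * a i)"
      using j by (intro sum.mono_neutral_left) auto
    then show "of_nat (n choose j) * (\<Sum>i=0..j. of_nat (j choose i) * a i) *
            (\<Sum>k=0..n-j. of_nat ((n-j) choose k) * (-1)^k * F (k+j)) =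
          (\<Sum>i=0..n. of_nat (j choose i) * a i) *
            (\<Sum>l=0..n. of_nat (n choose l) * of_nat (l choose j) * (-1)^(l-j) * F l)"
      using e2[of j n F] j by (simp add: mult.assoc mult.left_commute)
  qed
  also have "\<dots> = (\<Sum>j=0..n. \<Sum>i=0..n. \<Sum>l=0..n. (of_nat (j choose i) * a i) * (of_nat (n choose l) * of_nat (l choose j) * (-1)^(l-j) * F l))"
    by (simp add: sum_product)
  also have "\<dots> = (\<Sum>j=0..n. \<Sum>i=0..n. \<Sum>l=0..n. (of_nat (n choose l) * a i * F l) * (of_nat (l choose j) * of_nat (j choose i) * (-1)^(l-j)))"
    by (intro sum.cong refl) (simp add: mult_ac)
  also have "\<dots> = (\<Sum>i=0..n. \<Sum>j=0..n. \<Sum>l=0..n. (of_nat (n choose l) * a i * F l) * (of_nat (l choose j) * of_nat (j choose i) * (-1)^(l-j)))"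
    by (rule sum.swap)
  also have "\<dots> = (\<Sum>i=0..n. \<Sum>l=0..n. \<Sum>j=0..n. (of_nat (n choose l) * a i * F l) * (of_nat (l choose j) * of_nat (j choose i) * (-1)^(l-j)))"
    by (rule sum.cong[OF refl]) (rule sum.swap)
  also have "\<dots> = (\<Sum>l=0..n. \<Sum>i=0..n. \<Sum>j=0..n. (of_nat (n choose l) * a i * F l) * (of_nat (l choose j) * of_nat (j choose i) * (-1)^(l-j)))"
    by (rule sum.swap)
  also have "\<dots> = (\<Sum>l=0..n. \<Sum>i=0..n. (of_nat (n choose l) * a i * F l) * (if i = l then 1 else 0))"
    by (intro sum.cong refl) (simp add: sum_distrib_left[symmetric] inner)
  also have "\<dots> = (\<Sum>l=0..n. of_nat (n choose l) * a l * F l)"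
    by (simp add: if_distrib cong: if_cong)
  finally show ?thesis .
qed

lemma conv:
  fixes g :: "int \<Rightarrow> complex"
  shows "(\<Sum>k\<in>{k\<in>{0..int N}. P k}. g k) = (\<Sum>k=0..N. if P (int k) then g (int k) else 0)"
proof -
  have e: "{0..int N} = int ` {0..N}" by (simp add: image_int_atLeastAtMost)
  have 1: "(\<Sum>k\<in>{0..int N}. if P k then g k else 0) = (\<Sum>k=0..N. if P (int k) then g (int k) else 0)"
    unfolding e by (subst sum.reindex) auto
  show ?thesis
    by (simp only: sum.inter_filter[OF finite_atLeastAtMost] 1)
qed

lemma conv2:
  fixes g :: "int \<Rightarrow> complex"
  shows "(\<Sum>k\<in>{0..int N}. g k) = (\<Sum>k=0..N. g (int k))"
proof -
  have e: "{0..int N} = int ` {0..N}" by (simp add: image_int_atLeastAtMost)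
  show ?thesis unfolding e by (subst sum.reindex) auto
qed

lemma sig:
  fixes m r :: int and h :: "int \<Rightarrow> complex" and f :: "int \<Rightarrow> complex" and j :: nat
  assumes m: "m > 0"
  shows "(\<Sum>i=0..m-1. \<Sum>k\<in>{k\<in>{0..int N}. k mod m = (r + i - int j) mod m}. h k * f ((k - (r + i - int j)) div m))
       = (\<Sum>k\<in>{0..int N}. h k * f ((k + int j - r) div m))"
proof -
  have "(\<Sum>i=0..m-1. \<Sum>k\<in>{k\<in>{0..int N}. k mod m = (r + i - int j) mod m}. h k * f ((k - (r + i - int j)) div m))
      = (\<Sum>i=0..m-1. \<Sum>k\<in>{0..int N}. if k mod m = (r + i - int j) mod m then h k * f ((k - (r + i - int j)) div m) else 0)"
    by (simp only: sum.inter_filter[OF finite_atLeastAtMost])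
  also have "\<dots> = (\<Sum>k\<in>{0..int N}. \<Sum>i=0..m-1. if k mod m = (r + i - int j) mod m then h k * f ((k - (r + i - int j)) div m) else 0)"
    by (rule sum.swap)
  also have "\<dots> = (\<Sum>k\<in>{0..int N}. h k * f ((k + int j - r) div m))"
  proof (rule sum.cong[OF refl])
    fix k
    define c where "c = k + int j - r"
    have iff: "(k mod m = (r + i - int j) mod m) = (i = c mod m)" if i: "i \<in> {0..m-1}" for i
    proof -
      have im: "i mod m = i" using i m by auto
      have "(k mod m = (r + i - int j) mod m) = (m dvd (k - (r + i - int j)))"
        by (simp add: mod_eq_dvd_iff)
      also have "\<dots> = (m dvd (c - i))" by (simp add: c_def algebra_simps)
      also have "\<dots> = (c mod m = i mod m)" by (simp add: mod_eq_dvd_iff)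
      finally show ?thesis using im by auto
    qed
    have "(\<Sum>i=0..m-1. if k mod m = (r + i - int j) mod m then h k * f ((k - (r + i - int j)) div m) else 0)
        = (\<Sum>i=0..m-1. if i = c mod m then h k * f ((k - (r + c mod m - int j)) div m) else 0)"
      by (rule sum.cong[OF refl]) (simp add: iff)
    also have "\<dots> = h k * f ((k - (r + c mod m - int j)) div m)"
      using m by (simp add: sum.delta)
    also have "(k - (r + c mod m - int j)) = m * (c div m)"
      using minus_mod_eq_mult_div[of c m] by (simp add: c_def algebra_simps)
    also have "(m * (c div m)) div m = c div m" using m by simp
    finally show "(\<Sum>i=0..m-1. if k mod m = (r + i - int j) mod m then h k * f ((k - (r + i - int j)) div m) else 0)
        = h k * f ((k + int j - r) div m)" by (simp add: c_def)
  qed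
  finally show ?thesis .
qed

theorem lemma2p3:
  fixes d m :: int and n :: nat and r :: int and f :: "int \<Rightarrow> complex"
  assumes "d > 0" and "m > 0"
  shows "(\<Sum>k\<in>{k\<in>{0..int n}. k mod d = r mod d}.
            of_int (binomz n k) * (-1) ^ nat k * f \<lfloor>real_of_int (k - r) / real_of_int m\<rfloor>)
       = (\<Sum>j=0..n. of_nat (n choose j) *
            (\<Sum>i\<in>{i\<in>{0..int j}. i mod d = r mod d}. of_int (binomz j i) * (-1) ^ nat i) *
            (\<Sum>i=0..m-1.
               (\<Sum>k\<in>{k\<in>{0..int (n - j)}. k mod m = (r + i - int j) mod m}.
                  of_int (binomz (n - j) k) * (-1) ^ nat k * f ((k - (r + i - int j)) div m))))"
proof -
  define a where "a i = (if int i mod d = r mod d then (-1::complex)^i else 0)" for i :: nat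
  define F where "F l = f ((int l - r) div m)" for l :: nat
  have L: "(\<Sum>k\<in>{k\<in>{0..int n}. k mod d = r mod d}.
            of_int (binomz n k) * (-1) ^ nat k * f \<lfloor>real_of_int (k - r) / real_of_int m\<rfloor>)
        = (\<Sum>l=0..n. of_nat (n choose l) * a l * F l)"
    unfolding conv floor_divide_of_int_eq
    by (rule sum.cong[OF refl]) (simp add: binomz_def a_def F_def)
  have R: "(\<Sum>j=0..n. of_nat (n choose j) *
            (\<Sum>i\<in>{i\<in>{0..int j}. i mod d = r mod d}. of_int (binomz j i) * (-1) ^ nat i) *
            (\<Sum>i=0..m-1.
               (\<Sum>k\<in>{k\<in>{0..int (n - j)}. k mod m = (r + i - int j) mod m}.
                  of_int (binomz (n - j) k) * (-1) ^ nat k * f ((k - (r + i - int j)) div m))))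
     = (\<Sum>j=0..n. of_nat (n choose j) * (\<Sum>i=0..j. of_nat (j choose i) * a i) *
            (\<Sum>k=0..n-j. of_nat ((n-j) choose k) * (-1)^k * F (k+j)))"
  proof (rule sum.cong[OF refl])
    fix j assume j: "j \<in> {0..n}"
    have A: "(\<Sum>i\<in>{i\<in>{0..int j}. i mod d = r mod d}. of_int (binomz j i) * (-1::complex) ^ nat i)
        = (\<Sum>i=0..j. of_nat (j choose i) * a i)"
      unfolding conv
      by (rule sum.cong[OF refl]) (simp add: binomz_def a_def)
    have S: "(\<Sum>i=0..m-1.
               (\<Sum>k\<in>{k\<in>{0..int (n - j)}. k mod m = (r + i - int j) mod m}.
                  of_int (binomz (n - j) k) * (-1::complex) ^ nat k * f ((k - (r + i - int j)) div m)))
        = (\<Sum>k=0..n-j. of_nat ((n-j) choose k) * (-1)^k * F (k+j))"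
    proof -
      have "(\<Sum>i=0..m-1.
               (\<Sum>k\<in>{k\<in>{0..int (n - j)}. k mod m = (r + i - int j) mod m}.
                  of_int (binomz (n - j) k) * (-1::complex) ^ nat k * f ((k - (r + i - int j)) div m)))
          = (\<Sum>k\<in>{0..int (n-j)}. of_int (binomz (n - j) k) * (-1::complex) ^ nat k * f ((k + int j - r) div m))"
        using sig[OF assms(2), where N="n-j" and r=r and h="\<lambda>k. of_int (binomz (n - j) k) * (-1::complex) ^ nat k" and f=f and j=j]
        by simp
      also have "\<dots> = (\<Sum>k=0..n-j. of_nat ((n-j) choose k) * (-1)^k * F (k+j))"
        unfolding conv2
        by (rule sum.cong[OF refl]) (simp add: binomz_def F_def algebra_simps)
      finally show ?thesis .
    qed
    show "of_nat (n choose j) *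
            (\<Sum>i\<in>{i\<in>{0..int j}. i mod d = r mod d}. of_int (binomz j i) * (-1) ^ nat i) *
            (\<Sum>i=0..m-1.
               (\<Sum>k\<in>{k\<in>{0..int (n - j)}. k mod m = (r + i - int j) mod m}.
                  of_int (binomz (n - j) k) * (-1) ^ nat k * f ((k - (r + i - int j)) div m)))
        = of_nat (n choose j) * (\<Sum>i=0..j. of_nat (j choose i) * a i) *
            (\<Sum>k=0..n-j. of_nat ((n-j) choose k) * (-1)^k * F (k+j))"
      by (simp only: A S)
  qed
  show ?thesis unfolding L R by (rule core[symmetric])
qed

end
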